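(* Let $p$, $F$, $K$, $G=\langle\sigma\rangle$, $J$, $J_1$, $\epsilon(F^\times)$ be as in the context. (a) If $\xi_p\notin N(K^\times)$, then $J_1=\epsilon(F^\times)$. (b) If $\xi_p\in N(K^\times)$, then there exist $\lambda,\delta\in K^\times$ with $N_{K/F}(\lambda)=\xi_p$ and $\sigma(\delta)/\delta=\lambda^p$, and for any such $\delta$ one has $J_1=\epsilon(F^\times)\oplus\langle[\delta]\rangle$ (internal direct sum of $\mathbb{F}_p$-spaces).
   Context: Let $p$ be a prime and $F$ a field of characteristic different from $p$ containing a primitive $p$th root of unity $\xi_p$ (for $p=2$, $\xi_2=-1$). Let $a\in F^\times\setminus F^{\times p}$ and $K=F(\sqrt[p]{a})$; $K^\times=K\setminus\{0\}$. Let $G=\mathrm{Gal}(K/F)=\langle\sigma\rangle$, where $\sigma(\sqrt[p]{a})/\sqrt[p]{a}=\xi_p$. Let $J=K^\times/K^{\times p}$ with elements $[\gamma]$, $J_1=J^G=\ker(\sigma-1)$ the $G$-fixed submodule, and $\epsilon(F^\times)=F^\times K^{\times p}/K^{\times p}\subseteq J$ the image of $F^\times$. $N(K^\times)$ denotes the norm group $N_{K/F}(K^\times)\subseteq F^\times$. *)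

theory Defs
  imports "HOL-Computational_Algebra.Primes"
begin

text \<open>F is a subfield of the field K (K is the whole ambient type).\<close>
definition is_subfield :: "'k::field set \<Rightarrow> bool" where
  "is_subfield F \<longleftrightarrow> 0 \<in> F \<and> 1 \<in> F \<and>
     (\<forall>x\<in>F. \<forall>y\<in>F. x + y \<in> F \<and> x - y \<in> F \<and> x * y \<in> F) \<and>
     (\<forall>x\<in>F. x \<noteq> 0 \<longrightarrow> inverse x \<in> F)"

definition is_F_automorphism :: "'k::field set \<Rightarrow> ('k \<Rightarrow> 'k) \<Rightarrow> bool" where
  "is_F_automorphism F s \<longleftrightarrow> bij s \<and>
     (\<forall>x y. s (x + y) = s x + s y) \<and> (\<forall>x y. s (x * y) = s x * s y) \<and> s 1 = 1 \<and>
     (\<forall>x\<in>F. s x = x)"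

definition primitive_root :: "nat \<Rightarrow> 'k::field \<Rightarrow> bool" where
  "primitive_root p z \<longleftrightarrow> z ^ p = 1 \<and> (\<forall>k. 0 < k \<and> k < p \<longrightarrow> z ^ k \<noteq> 1)"

definition norm_KF :: "nat \<Rightarrow> ('k::field \<Rightarrow> 'k) \<Rightarrow> 'k \<Rightarrow> 'k" where
  "norm_KF p s x = (\<Prod>i<p. (s ^^ i) x)"

text \<open>The class [g] of g in J = K^x / K^x^p.\<close>
definition pclass :: "nat \<Rightarrow> 'k::field \<Rightarrow> 'k set" where
  "pclass p g = {g * u ^ p | u. u \<noteq> 0}"

definition Jgrp :: "nat \<Rightarrow> 'k::field set set" where
  "Jgrp p = pclass p ` (UNIV - {0})"

text \<open>J_1 = J^G: classes fixed by the induced action [g] \<mapsto> [sigma g].\<close>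
definition J1 :: "nat \<Rightarrow> ('k::field \<Rightarrow> 'k) \<Rightarrow> 'k set set" where
  "J1 p s = {pclass p g | g. g \<noteq> 0 \<and> pclass p (s g) = pclass p g}"

definition epsF :: "nat \<Rightarrow> 'k::field set \<Rightarrow> 'k set set" where
  "epsF p F = pclass p ` (F - {0})"

definition cyc_class :: "nat \<Rightarrow> 'k::field \<Rightarrow> 'k set set" where
  "cyc_class p d = {pclass p (d ^ i) | i. True}"

definition class_prod :: "nat \<Rightarrow> 'k::field set set \<Rightarrow> 'k set set \<Rightarrow> 'k set set" where
  "class_prod p A B = {pclass p (x * y) | x y. x \<noteq> 0 \<and> y \<noteq> 0 \<and> pclass p x \<in> A \<and> pclass p y \<in> B}"

definition internal_direct_sum :: "nat \<Rightarrow> 'k::field set set \<Rightarrow> 'k set set \<Rightarrow> 'k set set \<Rightarrow> bool" where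
  "internal_direct_sum p C A B \<longleftrightarrow> C = class_prod p A B \<and> A \<inter> B = {pclass p 1}"

end

theory Submission
  imports Defs "HOL-Number_Theory.Cong"
begin

lemma prim_pow_mod:
  assumes "primitive_root p (z::'k::field)"
  shows "z ^ n = z ^ (n mod p)"
proof -
  have "z ^ n = z ^ (p * (n div p) + n mod p)" by simp
  also have "\<dots> = (z ^ p) ^ (n div p) * z ^ (n mod p)" by (metis power_add power_mult)
  finally show ?thesis using assms by (simp add: primitive_root_def)
qed

lemma prim_pow_eq1:
  assumes "primitive_root p (z::'k::field)" "p > 0"
  shows "z ^ n = 1 \<longleftrightarrow> p dvd n"
proof
  assume h: "z ^ n = 1"
  have "z ^ (n mod p) = 1" using h prim_pow_mod[OF assms(1)] by metis
  moreover have "n mod p < p" using assms(2) by simp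
  ultimately have "n mod p = 0" using assms(1) unfolding primitive_root_def by (metis neq0_conv)
  then show "p dvd n" by auto
next
  assume "p dvd n"
  then obtain q where "n = p * q" by auto
  then show "z ^ n = 1" using assms(1) by (simp add: power_mult primitive_root_def)
qed

lemma root_sum:
  assumes "primitive_root p (z::'k::field)" "p > 0"
  shows "(\<Sum>j<p. z ^ (i * j)) = (if p dvd i then of_nat p else 0)"
proof (cases "p dvd i")
  case True
  then have "\<And>j. z ^ (i * j) = 1" using prim_pow_eq1[OF assms] by auto
  then show ?thesis using True by simp
next
  case False
  then have ne: "z ^ i \<noteq> 1" using prim_pow_eq1[OF assms] by auto
  have "(\<Sum>j<p. z ^ (i * j)) = (\<Sum>j<p. (z ^ i) ^ j)" by (simp add: power_mult)
  also have "\<dots> = ((z ^ i) ^ p - 1) / (z ^ i - 1)" using geometric_sum[OF ne] by simp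
  also have "(z ^ i) ^ p = 1" using assms(1) by (simp add: primitive_root_def flip: power_mult power_mult_distrib mult.commute) (metis power_mult mult.commute power_one)
  finally show ?thesis using False by simp
qed

lemma pclass_mul:
  assumes "(u::'k::field) \<noteq> 0"
  shows "pclass p (x * u ^ p) = pclass p x"
proof
  show "pclass p (x * u ^ p) \<subseteq> pclass p x"
  proof
    fix y assume "y \<in> pclass p (x * u ^ p)"
    then obtain v where "v \<noteq> 0" "y = x * u ^ p * v ^ p" unfolding pclass_def by auto
    then have "y = x * (u * v) ^ p" "u * v \<noteq> 0" using assms by (auto simp: power_mult_distrib)
    then show "y \<in> pclass p x" unfolding pclass_def by blast
  qed
  show "pclass p x \<subseteq> pclass p (x * u ^ p)"
  proof
    fix y assume "y \<in> pclass p x"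
    then obtain v where "v \<noteq> 0" "y = x * v ^ p" unfolding pclass_def by auto
    then have "y = x * u ^ p * (v / u) ^ p" "v / u \<noteq> 0" using assms by (auto simp: power_divide)
    then show "y \<in> pclass p (x * u ^ p)" unfolding pclass_def by blast
  qed
qed

lemma pclass_eqD:
  assumes "pclass p x = pclass p (y::'k::field)"
  shows "\<exists>u. u \<noteq> 0 \<and> x = y * u ^ p"
proof -
  have "x \<in> pclass p x" unfolding pclass_def by (rule CollectI, rule exI[of _ 1]) simp
  then show ?thesis using assms unfolding pclass_def by auto
qed



locale kum =
  fixes p :: nat and F :: "'k::field set" and \<xi> \<alpha> :: 'k and \<sigma> :: "'k \<Rightarrow> 'k"
  assumes pp: "prime p"
  and pnz: "of_nat p \<noteq> (0::'k)"
  and sub: "is_subfield F"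
  and xiF: "\<xi> \<in> F" and prim: "primitive_root p \<xi>"
  and anz: "\<alpha> \<noteq> 0"
  and span: "\<And>x. \<exists>c. (\<forall>i. c i \<in> F) \<and> x = (\<Sum>i<p. c i * \<alpha> ^ i)"
  and aut: "is_F_automorphism F \<sigma>" and sa: "\<sigma> \<alpha> = \<xi> * \<alpha>"
begin

lemma ppos: "p > 0" using pp prime_gt_0_nat by blast

lemma s_add: "\<sigma> (x + y) = \<sigma> x + \<sigma> y" using aut unfolding is_F_automorphism_def by blast
lemma s_mult: "\<sigma> (x * y) = \<sigma> x * \<sigma> y" using aut unfolding is_F_automorphism_def by blast
lemma s_F: "x \<in> F \<Longrightarrow> \<sigma> x = x" using aut unfolding is_F_automorphism_def by blast
lemma s_inj: "inj \<sigma>" using aut unfolding is_F_automorphism_def bij_def by blast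
lemma s_zero: "\<sigma> 0 = 0"
proof -
  have "\<sigma> 0 = \<sigma> 0 + \<sigma> 0" using s_add[of 0 0] by simp
  then show ?thesis by (metis add_cancel_left_right)
qed
lemma s_one: "\<sigma> 1 = 1" using aut unfolding is_F_automorphism_def by blast
lemma s_nz: "x \<noteq> 0 \<Longrightarrow> \<sigma> x \<noteq> 0" using s_inj s_zero by (metis injD)
lemma s_pow: "\<sigma> (x ^ n) = \<sigma> x ^ n" by (induction n) (simp_all add: s_one s_mult)
lemma s_inv: "\<sigma> (inverse x) = inverse (\<sigma> x)"
proof (cases "x = 0")
  case True then show ?thesis by (simp add: s_zero)
next
  case False
  have "\<sigma> x * \<sigma> (inverse x) = 1" using False by (simp flip: s_mult add: s_one)
  then show ?thesis using False s_nz by (simp add: field_simps)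
qed
lemma s_div: "\<sigma> (x / y) = \<sigma> x / \<sigma> y" by (simp add: divide_inverse s_mult s_inv)
lemma s_sum: "\<sigma> (sum f A) = (\<Sum>a\<in>A. \<sigma> (f a))"
  by (induction A rule: infinite_finite_induct) (simp_all add: s_zero s_add)
lemma s_prod: "\<sigma> (prod f A) = (\<Prod>a\<in>A. \<sigma> (f a))"
  by (induction A rule: infinite_finite_induct) (simp_all add: s_one s_mult)

lemma S_mult: "(\<sigma>^^i) (x * y) = (\<sigma>^^i) x * (\<sigma>^^i) y" by (induction i) (simp_all add: s_mult)
lemma S_sum: "(\<sigma>^^i) (sum f A) = (\<Sum>a\<in>A. (\<sigma>^^i) (f a))" by (induction i) (simp_all add: s_sum)
lemma S_pow: "(\<sigma>^^i) (x ^ n) = (\<sigma>^^i) x ^ n" by (induction i) (simp_all add: s_pow)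
lemma S_F: "x \<in> F \<Longrightarrow> (\<sigma>^^i) x = x" by (induction i) (simp_all add: s_F)
lemma S_nz: "x \<noteq> 0 \<Longrightarrow> (\<sigma>^^i) x \<noteq> 0" by (induction i) (simp_all add: s_nz)
lemma S_one: "(\<sigma>^^i) 1 = 1" by (induction i) (simp_all add: s_one)
lemma S_alpha: "(\<sigma>^^i) \<alpha> = \<xi> ^ i * \<alpha>"
  by (induction i) (simp_all add: s_mult sa S_F xiF s_pow s_F)
lemma S_alpha_pow: "(\<sigma>^^i) (\<alpha> ^ j) = \<xi> ^ (i * j) * \<alpha> ^ j"
  by (simp add: S_pow S_alpha power_mult_distrib power_mult)

lemma S_expand:
  assumes "\<forall>j. c j \<in> F"
  shows "(\<sigma>^^i) (\<Sum>j<p. c j * \<alpha> ^ j) = (\<Sum>j<p. c j * \<xi> ^ (i * j) * \<alpha> ^ j)"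
  using assms by (simp add: S_sum S_mult S_F S_alpha_pow mult.assoc)

lemma S_p: "(\<sigma>^^p) x = x"
proof -
  obtain c where c: "\<forall>i. c i \<in> F" "x = (\<Sum>i<p. c i * \<alpha> ^ i)" using span by blast
  have "\<And>j. \<xi> ^ (p * j) = 1" using prim by (simp add: power_mult primitive_root_def)
  then show ?thesis using S_expand[OF c(1), of p] c(2) by simp
qed

lemma fixed:
  assumes "\<sigma> x = x"
  shows "x \<in> F"
proof -
  obtain c where c: "\<forall>i. c i \<in> F" "x = (\<Sum>i<p. c i * \<alpha> ^ i)" using span by blast
  have Si: "(\<sigma>^^i) x = x" for i by (induction i) (simp_all add: assms)
  have "of_nat p * x = (\<Sum>i<p. (\<sigma>^^i) x)" by (simp add: Si)
  also have "\<dots> = (\<Sum>i<p. \<Sum>j<p. c j * \<xi> ^ (i * j) * \<alpha> ^ j)"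
    using S_expand[OF c(1)] c(2) by simp
  also have "\<dots> = (\<Sum>j<p. c j * \<alpha> ^ j * (\<Sum>i<p. \<xi> ^ (j * i)))"
    by (subst sum.swap) (simp add: sum_distrib_left mult.commute mult.left_commute)
  also have "\<dots> = (\<Sum>j<p. c j * \<alpha> ^ j * (if p dvd j then of_nat p else 0))"
    using root_sum[OF prim ppos] by simp
  also have "\<dots> = (\<Sum>j<p. if j = 0 then c j * \<alpha> ^ j * of_nat p else 0)"
    by (rule sum.cong) (auto simp: dvd_imp_le)
  also have "\<dots> = c 0 * of_nat p" using ppos by simp
  finally have "x = c 0" using pnz by (simp add: mult.commute)
  then show ?thesis using c(1) by simp
qed

lemma unity:
  assumes "x ^ p = 1"
  shows "\<exists>m. x = \<xi> ^ m"
proof -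
  define \<eta> where "\<eta> = inverse \<xi>"
  have xnz: "\<xi> \<noteq> 0" using prim ppos unfolding primitive_root_def by (metis zero_power one_neq_zero)
  have primeta: "primitive_root p \<eta>" using prim unfolding \<eta>_def primitive_root_def
    by (metis inverse_1 power_inverse inverse_eq_1_iff)
  have "(\<Sum>m<p. \<Sum>j<p. (x * \<eta> ^ m) ^ j) = (\<Sum>j<p. x ^ j * (\<Sum>m<p. \<eta> ^ (j * m)))"
  proof -
    have e: "\<And>m j. (x * \<eta> ^ m) ^ j = x ^ j * \<eta> ^ (j * m)"
      by (metis power_mult_distrib power_mult mult.commute)
    show ?thesis by (simp only: e) (subst sum.swap, simp add: sum_distrib_left)
  qed
  also have "\<dots> = (\<Sum>j<p. if j = 0 then x ^ j * of_nat p else 0)"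
    using root_sum[OF primeta ppos] by (intro sum.cong) (auto simp: dvd_imp_le)
  also have "\<dots> = of_nat p" using ppos by simp
  finally have "(\<Sum>m<p. \<Sum>j<p. (x * \<eta> ^ m) ^ j) \<noteq> 0" using pnz by simp
  then obtain m where m: "(\<Sum>j<p. (x * \<eta> ^ m) ^ j) \<noteq> 0" by (meson sum.neutral)
  have zp: "(x * \<eta> ^ m) ^ p = 1" using assms primeta unfolding primitive_root_def
    by (simp add: power_mult_distrib) (metis power_mult mult.commute power_one)
  have "x * \<eta> ^ m = 1"
  proof (rule ccontr)
    assume "x * \<eta> ^ m \<noteq> 1"
    then show False using m geometric_sum[of "x * \<eta> ^ m" p] zp by simp
  qed
  then have "x = \<xi> ^ m" using xnz unfolding \<eta>_def by (simp add: power_inverse field_simps)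
  then show ?thesis by blast
qed

end


context kum begin

abbreviation N where "N \<equiv> norm_KF p \<sigma>"

lemma N_mult: "N (x * y) = N x * N y"
  unfolding norm_KF_def by (simp add: S_mult prod.distrib)
lemma N_nz: "x \<noteq> 0 \<Longrightarrow> N x \<noteq> 0"
  unfolding norm_KF_def by (simp add: S_nz)
lemma N_zero: "N 0 = 0"
proof -
  have "(\<sigma>^^0) 0 = (0::'k)" by simp
  then show ?thesis unfolding norm_KF_def using ppos by (metis lessThan_iff prod_zero_iff finite_lessThan)
qed
lemma N_F: "x \<in> F \<Longrightarrow> N x = x ^ p"
  unfolding norm_KF_def by (simp add: S_F)
lemma N_pow: "N (x ^ n) = N x ^ n"
  unfolding norm_KF_def by (simp add: S_pow prod_power_distrib)
lemma N_one: "N 1 = 1"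
  unfolding norm_KF_def by (simp add: S_one)
lemma N_inv: "N (inverse x) = inverse (N x)"
proof (cases "x = 0")
  case True then show ?thesis by (simp add: N_zero)
next
  case False
  have "N x * N (inverse x) = 1" using False by (simp flip: N_mult add: N_one)
  then show ?thesis using False N_nz by (simp add: field_simps)
qed
lemma N_div: "N (x / y) = N x / N y" by (simp add: divide_inverse N_mult N_inv)
lemma N_sigma: "N (\<sigma> x) = N x"
proof -
  define f where "f i = (\<sigma>^^i) x" for i
  have "(\<Prod>i<Suc p. f i) = f 0 * (\<Prod>i<p. f (Suc i))" by (rule prod.lessThan_Suc_shift)
  moreover have "(\<Prod>i<Suc p. f i) = (\<Prod>i<p. f i) * f p" by simp
  moreover have "f p = f 0" unfolding f_def by (simp add: S_p)
  ultimately have e: "f 0 * (\<Prod>i<p. f (Suc i)) = f 0 * (\<Prod>i<p. f i)" by (metis mult.commute)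
  have "N (\<sigma> x) = (\<Prod>i<p. f (Suc i))" unfolding norm_KF_def f_def by (simp add: funpow_swap1)
  moreover have "N x = (\<Prod>i<p. f i)" unfolding norm_KF_def f_def by simp
  ultimately show ?thesis using e
  proof (cases "x = 0")
    case True then show ?thesis by (simp add: s_zero)
  next
    case False
    then have "f 0 \<noteq> 0" unfolding f_def by simp
    then show ?thesis using e \<open>N (\<sigma> x) = _\<close> \<open>N x = _\<close> by simp
  qed
qed

lemma hilbert90:
  assumes knz: "k \<noteq> 0" and nk: "N k = 1"
  shows "\<exists>\<beta>. \<beta> \<noteq> 0 \<and> \<sigma> \<beta> = \<beta> * k"
proof -
  define c where "c i = (\<Prod>t<i. (\<sigma>^^t) k)" for i
  define b where "b \<theta> = (\<Sum>i<p. c i * (\<sigma>^^i) \<theta>)" for \<theta>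
  have c0: "c 0 = 1" unfolding c_def by simp
  have cp: "c p = 1" using nk unfolding c_def norm_KF_def by simp
  have csuc: "k * \<sigma> (c i) = c (Suc i)" for i
  proof -
    have "\<sigma> (c i) = (\<Prod>t<i. (\<sigma>^^(Suc t)) k)" unfolding c_def by (simp add: s_prod)
    moreover have "c (Suc i) = (\<sigma>^^0) k * (\<Prod>t<i. (\<sigma>^^(Suc t)) k)" unfolding c_def by (rule prod.lessThan_Suc_shift)
    ultimately show ?thesis by simp
  qed
  have fixb: "k * \<sigma> (b \<theta>) = b \<theta>" for \<theta>
  proof -
    define g where "g i = c i * (\<sigma>^^i) \<theta>" for i
    have "k * \<sigma> (b \<theta>) = (\<Sum>i<p. k * (\<sigma> (c i) * (\<sigma>^^(Suc i)) \<theta>))"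
      unfolding b_def by (simp add: s_sum s_mult sum_distrib_left)
    also have "\<dots> = (\<Sum>i<p. g (Suc i))" unfolding g_def
      by (simp add: mult.assoc flip: csuc)
    finally have e1: "k * \<sigma> (b \<theta>) = (\<Sum>i<p. g (Suc i))" .
    have "(\<Sum>i<Suc p. g i) = g 0 + (\<Sum>i<p. g (Suc i))" by (rule sum.lessThan_Suc_shift)
    moreover have "(\<Sum>i<Suc p. g i) = (\<Sum>i<p. g i) + g p" by simp
    moreover have "g p = g 0" unfolding g_def by (simp add: S_p c0 cp)
    ultimately have "(\<Sum>i<p. g (Suc i)) = (\<Sum>i<p. g i)" by (simp add: add.commute)
    then show ?thesis using e1 unfolding b_def g_def by simp
  qed
  have "\<exists>j. b (\<alpha> ^ j) \<noteq> 0"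
  proof (rule ccontr)
    assume "\<not> ?thesis"
    then have z: "b (\<alpha> ^ j) = 0" for j by blast
    have bj: "b (\<alpha> ^ j) = \<alpha> ^ j * (\<Sum>i<p. c i * \<xi> ^ (i * j))" for j
      unfolding b_def by (simp add: S_alpha_pow sum_distrib_left mult.commute mult.left_commute)
    have zz: "(\<Sum>i<p. c i * \<xi> ^ (i * j)) = 0" for j using z[of j] bj[of j] anz by simp
    have "0 = (\<Sum>j<p. \<Sum>i<p. c i * \<xi> ^ (i * j))" using zz by simp
    also have "\<dots> = (\<Sum>i<p. c i * (\<Sum>j<p. \<xi> ^ (i * j)))"
      by (subst sum.swap) (simp add: sum_distrib_left)
    also have "\<dots> = (\<Sum>i<p. if i = 0 then c i * of_nat p else 0)"
      using root_sum[OF prim ppos] by (intro sum.cong) (auto simp: dvd_imp_le)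
    also have "\<dots> = of_nat p" using ppos c0 by simp
    finally show False using pnz by simp
  qed
  then obtain j where bnz: "b (\<alpha> ^ j) \<noteq> 0" by blast
  define \<beta> where "\<beta> = inverse (b (\<alpha> ^ j))"
  have sb: "\<sigma> (b (\<alpha> ^ j)) = b (\<alpha> ^ j) / k" using fixb[of "\<alpha> ^ j"] knz
    by (metis nonzero_mult_div_cancel_left)
  have "\<sigma> \<beta> = \<beta> * k" unfolding \<beta>_def s_inv sb using bnz knz
    by (simp add: field_simps)
  then show ?thesis using bnz unfolding \<beta>_def by (metis inverse_nonzero_iff_nonzero)
qed

end


context kum begin

lemma F_one: "1 \<in> F" using sub unfolding is_subfield_def by blast
lemma F_mult: "x \<in> F \<Longrightarrow> y \<in> F \<Longrightarrow> x * y \<in> F" using sub unfolding is_subfield_def by blast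
lemma F_pow: "x \<in> F \<Longrightarrow> x ^ n \<in> F" by (induction n) (simp_all add: F_one F_mult)

lemma xinz: "\<xi> \<noteq> 0" using prim ppos unfolding primitive_root_def by (metis zero_power one_neq_zero)

lemma KL:
  assumes "\<gamma> \<noteq> 0" "pclass p (\<sigma> \<gamma>) = pclass p \<gamma>"
  shows "\<exists>k c. k \<noteq> 0 \<and> \<sigma> \<gamma> = \<gamma> * k ^ p \<and> N k = \<xi> ^ c"
proof -
  obtain u where u: "u \<noteq> 0" "\<sigma> \<gamma> = \<gamma> * u ^ p" using pclass_eqD[OF assms(2)] by blast
  have "N \<gamma> = N \<gamma> * N u ^ p" using N_sigma[of \<gamma>] u(2) by (simp add: N_mult N_pow)
  then have "N u ^ p = 1" using N_nz[OF assms(1)] by simp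
  then obtain c where "N u = \<xi> ^ c" using unity by blast
  then show ?thesis using u by blast
qed

lemma partA:
  assumes "\<not> (\<exists>l. l \<noteq> 0 \<and> N l = \<xi>)"
  shows "J1 p \<sigma> = epsF p F"
proof
  show "J1 p \<sigma> \<subseteq> epsF p F"
  proof
    fix X assume "X \<in> J1 p \<sigma>"
    then obtain \<gamma> where g: "X = pclass p \<gamma>" "\<gamma> \<noteq> 0" "pclass p (\<sigma> \<gamma>) = pclass p \<gamma>"
      unfolding J1_def by blast
    obtain k c where kc: "k \<noteq> 0" "\<sigma> \<gamma> = \<gamma> * k ^ p" "N k = \<xi> ^ c" using KL[OF g(2,3)] by blast
    have "p dvd c"
    proof (rule ccontr)
      assume "\<not> p dvd c"
      then have "coprime c p" using prime_imp_coprime[OF pp] by (simp add: coprime_commute)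
      then obtain m where "[c * m = Suc 0] (mod p)" using cong_solve_coprime_nat by blast
      then have cm: "(c * m) mod p = 1" using pp prime_gt_1_nat[OF pp] by (simp add: cong_def)
      have "N (k ^ m) = \<xi> ^ (c * m)" using kc(3) by (simp add: N_pow power_mult)
      also have "\<dots> = \<xi>" using prim_pow_mod[OF prim, of "c * m"] cm by simp
      finally show False using assms kc(1) by (metis power_not_zero)
    qed
    then have "N k = 1" using kc(3) prim_pow_eq1[OF prim ppos] by simp
    then obtain \<beta> where b: "\<beta> \<noteq> 0" "\<sigma> \<beta> = \<beta> * k" using hilbert90 kc(1) by blast
    define f where "f = \<gamma> / \<beta> ^ p"
    have "\<sigma> f = f" unfolding f_def using b kc(1,2) g(2)
      by (simp add: s_div s_pow power_mult_distrib)
    then have fF: "f \<in> F" by (rule fixed)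
    have fnz: "f \<noteq> 0" unfolding f_def using b g by simp
    have "\<gamma> = f * \<beta> ^ p" unfolding f_def using b by simp
    then have "X = pclass p f" using g(1) pclass_mul[OF b(1)] by simp
    then show "X \<in> epsF p F" unfolding epsF_def using fF fnz by blast
  qed
  show "epsF p F \<subseteq> J1 p \<sigma>"
    unfolding epsF_def J1_def using s_F by fastforce
qed

lemma exist:
  assumes "l \<noteq> 0" "N l = \<xi>"
  shows "\<exists>l \<delta>. l \<noteq> 0 \<and> \<delta> \<noteq> 0 \<and> N l = \<xi> \<and> \<sigma> \<delta> = \<delta> * l ^ p"
proof -
  have "N (l ^ p) = 1" using assms prim by (simp add: N_pow primitive_root_def)
  then obtain \<delta> where "\<delta> \<noteq> 0" "\<sigma> \<delta> = \<delta> * l ^ p" using hilbert90[of "l ^ p"] assms(1) by auto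
  then show ?thesis using assms by blast
qed

end


context kum begin

lemma powcomm: "((x::'k) ^ a) ^ b = (x ^ b) ^ a" by (metis power_mult mult.commute)

lemma partB:
  assumes l: "l \<noteq> 0" "N l = \<xi>" and d: "\<delta> \<noteq> 0" "\<sigma> \<delta> = \<delta> * l ^ p"
  shows "internal_direct_sum p (J1 p \<sigma>) (epsF p F) (cyc_class p \<delta>)"
  unfolding internal_direct_sum_def
proof (intro conjI)
  show "J1 p \<sigma> = class_prod p (epsF p F) (cyc_class p \<delta>)"
  proof
    show "J1 p \<sigma> \<subseteq> class_prod p (epsF p F) (cyc_class p \<delta>)"
    proof
      fix X assume "X \<in> J1 p \<sigma>"
      then obtain \<gamma> where g: "X = pclass p \<gamma>" "\<gamma> \<noteq> 0" "pclass p (\<sigma> \<gamma>) = pclass p \<gamma>"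
        unfolding J1_def by blast
      obtain k c where kc: "k \<noteq> 0" "\<sigma> \<gamma> = \<gamma> * k ^ p" "N k = \<xi> ^ c" using KL[OF g(2,3)] by blast
      have "N (k / l ^ c) = 1" using kc l xinz by (simp add: N_div N_pow)
      moreover have "k / l ^ c \<noteq> 0" using kc l by simp
      ultimately obtain \<beta> where b: "\<beta> \<noteq> 0" "\<sigma> \<beta> = \<beta> * (k / l ^ c)" using hilbert90 by blast
      define f where "f = \<gamma> / (\<delta> ^ c * \<beta> ^ p)"
      have "\<sigma> f = \<gamma> * k ^ p / ((\<delta> ^ c * (l ^ c) ^ p) * (\<beta> ^ p * (k ^ p / (l ^ c) ^ p)))"
        unfolding f_def using b kc(1,2) d
        by (simp add: s_div s_pow s_mult power_mult_distrib power_divide powcomm[of l p c])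
      also have "\<dots> = f" unfolding f_def using kc(1) l(1) by (simp add: field_simps)
      finally have "\<sigma> f = f" .
      then have fF: "f \<in> F" by (rule fixed)
      have fnz: "f \<noteq> 0" unfolding f_def using b g d by simp
      have "\<gamma> = f * \<delta> ^ c * \<beta> ^ p" unfolding f_def using b d by simp
      then have "X = pclass p (f * \<delta> ^ c)" using g(1) pclass_mul[OF b(1)] by simp
      moreover have "pclass p f \<in> epsF p F" unfolding epsF_def using fF fnz by blast
      moreover have "pclass p (\<delta> ^ c) \<in> cyc_class p \<delta>" unfolding cyc_class_def by blast
      ultimately show "X \<in> class_prod p (epsF p F) (cyc_class p \<delta>)"
        unfolding class_prod_def using fnz d by fastforce
    qed
    show "class_prod p (epsF p F) (cyc_class p \<delta>) \<subseteq> J1 p \<sigma>"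
    proof
      fix Y assume "Y \<in> class_prod p (epsF p F) (cyc_class p \<delta>)"
      then obtain x y where xy: "Y = pclass p (x * y)" "x \<noteq> 0" "y \<noteq> 0"
        "pclass p x \<in> epsF p F" "pclass p y \<in> cyc_class p \<delta>" unfolding class_prod_def by blast
      obtain f where f: "f \<in> F" "pclass p x = pclass p f" using xy(4) unfolding epsF_def by blast
      obtain i where i: "pclass p y = pclass p (\<delta> ^ i)" using xy(5) unfolding cyc_class_def by blast
      obtain u where u: "u \<noteq> 0" "x = f * u ^ p" using pclass_eqD[OF f(2)] by blast
      obtain v where v: "v \<noteq> 0" "y = \<delta> ^ i * v ^ p" using pclass_eqD[OF i] by blast
      define w where "w = \<sigma> u * l ^ i * \<sigma> v / (u * v)"
      have wnz: "w \<noteq> 0" unfolding w_def using u v l s_nz by simp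
      have "\<sigma> (x * y) = f * \<sigma> u ^ p * (\<delta> ^ i * (l ^ i) ^ p) * \<sigma> v ^ p"
        using u v f d by (simp add: s_mult s_pow s_F power_mult_distrib powcomm[of l p i])
      also have "\<dots> = x * y * w ^ p" unfolding w_def u(2) v(2) using u(1) v(1)
        by (simp add: power_divide power_mult_distrib field_simps)
      finally have "pclass p (\<sigma> (x * y)) = pclass p (x * y)" using pclass_mul[OF wnz] by simp
      then show "Y \<in> J1 p \<sigma>" unfolding J1_def using xy by auto
    qed
  qed
  show "epsF p F \<inter> cyc_class p \<delta> = {pclass p 1}"
  proof
    show "{pclass p 1} \<subseteq> epsF p F \<inter> cyc_class p \<delta>"
    proof -
      have "pclass p 1 \<in> epsF p F" unfolding epsF_def by (rule imageI) (simp add: F_one)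
      moreover have "pclass p 1 \<in> cyc_class p \<delta>" unfolding cyc_class_def
        by (rule CollectI, rule exI[of _ 0]) simp
      ultimately show ?thesis by blast
    qed
    show "epsF p F \<inter> cyc_class p \<delta> \<subseteq> {pclass p 1}"
    proof
      fix X assume "X \<in> epsF p F \<inter> cyc_class p \<delta>"
      then have X1: "X \<in> epsF p F" and X2: "X \<in> cyc_class p \<delta>" by simp_all
      from X1 obtain f where f1: "f \<in> F - {0}" "X = pclass p f" unfolding epsF_def by (rule imageE) simp
      from X2 obtain i where f2: "X = pclass p (\<delta> ^ i)" unfolding cyc_class_def by blast
      have fi: "X = pclass p f" "f \<in> F" "f \<noteq> 0" "X = pclass p (\<delta> ^ i)" using f1 f2 by simp_all
      have "p dvd i"
      proof (rule ccontr)
        assume ndvd: "\<not> p dvd i"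
        obtain u where u: "u \<noteq> 0" "\<delta> ^ i = f * u ^ p" using pclass_eqD[of p "\<delta> ^ i" f] fi by metis
        have "f * \<sigma> u ^ p = \<sigma> (\<delta> ^ i)" using u fi by (simp add: s_mult s_pow s_F)
        also have "\<dots> = \<delta> ^ i * (l ^ i) ^ p" using d by (simp add: s_pow power_mult_distrib powcomm[of l p i])
        also have "\<dots> = f * (u * l ^ i) ^ p" using u by (simp add: power_mult_distrib)
        finally have "\<sigma> u ^ p = (u * l ^ i) ^ p" using fi(3) by simp
        then have "(\<sigma> u / (u * l ^ i)) ^ p = 1" using u l by (simp add: power_divide)
        then obtain e where e: "\<sigma> u / (u * l ^ i) = \<xi> ^ e" using unity by blast
        then have "\<sigma> u = u * l ^ i * \<xi> ^ e" using u l by (simp add: field_simps)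
        then have "N u = N u * \<xi> ^ i * (\<xi> ^ e) ^ p"
          using N_sigma[of u] l by (simp add: N_mult N_pow N_F F_pow xiF powcomm[of \<xi> e p])
        moreover have "(\<xi> ^ e) ^ p = 1" using prim by (simp add: powcomm[of \<xi> e p] primitive_root_def)
        ultimately have "\<xi> ^ i = 1" using N_nz[OF u(1)] by simp
        then show False using ndvd prim_pow_eq1[OF prim ppos] by simp
      qed
      then obtain q where "i = p * q" by (rule dvdE)
      then have "\<delta> ^ i = 1 * (\<delta> ^ q) ^ p" by (simp add: powcomm power_mult)
      then have "X = pclass p 1" using fi(4) pclass_mul[of "\<delta> ^ q" p 1] d by simp
      then show "X \<in> {pclass p 1}" by simp
    qed
  qed
qed

end

theorem lemma2:
  fixes p :: nat and F :: "'k::field set" and \<xi> a \<alpha> :: 'k and \<sigma> :: "'k \<Rightarrow> 'k"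
  assumes "prime p"
    and "of_nat p \<noteq> (0::'k)"
    and "is_subfield F"
    and "\<xi> \<in> F" and "primitive_root p \<xi>"
    and "a \<in> F" and "a \<noteq> 0" and "\<not> (\<exists>b\<in>F. b ^ p = a)"
    and "\<alpha> ^ p = a"
    and "UNIV = {\<Sum>i<p. c i * \<alpha> ^ i | c. \<forall>i. c i \<in> F}"
    and "is_F_automorphism F \<sigma>" and "\<sigma> \<alpha> = \<xi> * \<alpha>"
  shows "(\<not> (\<exists>l. l \<noteq> 0 \<and> norm_KF p \<sigma> l = \<xi>) \<longrightarrow> J1 p \<sigma> = epsF p F)
       \<and> ((\<exists>l. l \<noteq> 0 \<and> norm_KF p \<sigma> l = \<xi>) \<longrightarrow>
            (\<exists>l \<delta>. l \<noteq> 0 \<and> \<delta> \<noteq> 0 \<and> norm_KF p \<sigma> l = \<xi> \<and> \<sigma> \<delta> = \<delta> * l ^ p)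
          \<and> (\<forall>l \<delta>. l \<noteq> 0 \<and> \<delta> \<noteq> 0 \<and> norm_KF p \<sigma> l = \<xi> \<and> \<sigma> \<delta> = \<delta> * l ^ p \<longrightarrow>
               internal_direct_sum p (J1 p \<sigma>) (epsF p F) (cyc_class p \<delta>)))"
proof -
  have span: "\<And>x. \<exists>c. (\<forall>i. c i \<in> F) \<and> x = (\<Sum>i<p. c i * \<alpha> ^ i)"
  proof -
    fix x :: 'k
    have "x \<in> {\<Sum>i<p. c i * \<alpha> ^ i | c. \<forall>i. c i \<in> F}" using assms(10) by blast
    then show "\<exists>c. (\<forall>i. c i \<in> F) \<and> x = (\<Sum>i<p. c i * \<alpha> ^ i)" by blast
  qed
  have anz: "\<alpha> \<noteq> 0" using assms(7,9) prime_gt_0_nat[OF assms(1)] by auto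
  interpret K: kum p F \<xi> \<alpha> \<sigma>
    by (unfold_locales) (use assms span anz in auto)
  show ?thesis using K.partA K.exist K.partB by blast
qed

end
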